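(* Let $n_1,\dots,n_\ell$ be integers with $\prod_{i=1}^\ell n_i = n$, and let $A \in \{0,1\}^{n\times n}$ with $A \neq 0$. If there exist matrices $A_i \in \{0,1\}^{n_i\times n_i}$, $i=1,\dots,\ell$, with $A = A_1\otimes A_2\otimes\cdots\otimes A_\ell$, then these matrices are unique: if also $A = \hat A_1\otimes\cdots\otimes \hat A_\ell$ with $\hat A_i\in\{0,1\}^{n_i\times n_i}$, then $\hat A_i = A_i$ for all $i$.
   Context: Binary matrices have entries in $\{0,1\}$ and all arithmetic (in particular inside Kronecker products) uses Boolean addition ($1+1=1$) and multiplication. An $(n_1,\dots,n_\ell)$ factorization of $A$ is an expression $A=A_1\otimes\cdots\otimes A_\ell$ with $A_i\in\{0,1\}^{n_i\times n_i}$. *)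

theory Defs
  imports "Jordan_Normal_Form.Matrix"
begin

text \<open>Binary matrices are represented as matrices with Boolean entries (True = 1, False = 0).
  The Kronecker product uses Boolean multiplication (conjunction), with the standard
  0-indexed block convention: entry ((i,k),(j,l)) of A \<otimes> B is A(i,j) * B(k,l).\<close>

definition bkron :: "bool mat \<Rightarrow> bool mat \<Rightarrow> bool mat" where
  "bkron A B = mat (dim_row A * dim_row B) (dim_col A * dim_col B)
     (\<lambda>(i, j). A $$ (i div dim_row B, j div dim_col B) \<and> B $$ (i mod dim_row B, j mod dim_col B))"

definition bkron_list :: "bool mat list \<Rightarrow> bool mat" where
  "bkron_list As = foldr bkron As (mat 1 1 (\<lambda>_. True))"

definition nonzero_bmat :: "bool mat \<Rightarrow> bool" where
  "nonzero_bmat A \<longleftrightarrow> (\<exists>i j. i < dim_row A \<and> j < dim_col A \<and> A $$ (i, j))"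

end

theory Submission
  imports Defs
begin

lemma bkron_carrier:
  "A \<in> carrier_mat a a \<Longrightarrow> B \<in> carrier_mat b b \<Longrightarrow> bkron A B \<in> carrier_mat (a*b) (a*b)"
  by (simp add: bkron_def)

lemma bkron_entry:
  assumes "A \<in> carrier_mat a a" "B \<in> carrier_mat b b" "i < a" "j < a" "k < b" "l < b"
  shows "bkron A B $$ (i*b+k, j*b+l) = (A $$ (i,j) \<and> B $$ (k,l))"
proof -
  have idx: "x*b+y < a*b" if "x < a" "y < b" for x y
  proof -
    have "x*b+y < x*b+b" using that by simp
    also have "... = Suc x * b" by simp
    also have "... \<le> a*b" using that by (intro mult_le_mono1) simp
    finally show ?thesis .
  qed
  have "i*b+k < a*b" using assms
    using idx by blast
  moreover have "j*b+l < a*b" using assms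
    using idx by blast
  ultimately show ?thesis using assms by (simp add: bkron_def)
qed

lemma bkron_nonzero:
  assumes "A \<in> carrier_mat a a" "B \<in> carrier_mat b b" "nonzero_bmat (bkron A B)"
  shows "\<exists>i j k l. i < a \<and> j < a \<and> k < b \<and> l < b \<and> A $$ (i,j) \<and> B $$ (k,l)"
proof -
  obtain p q where pq: "p < a*b" "q < a*b" "bkron A B $$ (p,q)"
    using assms by (auto simp: nonzero_bmat_def bkron_def)
  have b0: "b > 0" using pq by (cases "b = 0") auto
  have "p div b < a" "q div b < a" using pq b0
    by (simp_all add: less_mult_imp_div_less)
  moreover have "p mod b < b" "q mod b < b" using b0 by auto
  moreover have "A $$ (p div b, q div b) \<and> B $$ (p mod b, q mod b)"
    using pq assms by (simp add: bkron_def)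
  ultimately show ?thesis by blast
qed

lemma kron_cancel:
  assumes A: "A \<in> carrier_mat a a" and A': "A' \<in> carrier_mat a a"
    and B: "B \<in> carrier_mat b b" and B': "B' \<in> carrier_mat b b"
    and eq: "bkron A B = bkron A' B'" and nz: "nonzero_bmat (bkron A B)"
  shows "A = A' \<and> B = B'"
proof -
  have nz': "nonzero_bmat (bkron A' B')" using nz eq by simp
  obtain i0 j0 k0 l0 where z: "i0 < a" "j0 < a" "k0 < b" "l0 < b" "A $$ (i0,j0)" "B $$ (k0,l0)"
    using bkron_nonzero[OF A B nz] by blast
  obtain i1 j1 k1 l1 where z': "i1 < a" "j1 < a" "k1 < b" "l1 < b" "A' $$ (i1,j1)" "B' $$ (k1,l1)"
    using bkron_nonzero[OF A' B' nz'] by blast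
  have E: "(A $$ (i,j) \<and> B $$ (k,l)) = (A' $$ (i,j) \<and> B' $$ (k,l))"
    if "i < a" "j < a" "k < b" "l < b" for i j k l
    using bkron_entry[OF A B that] bkron_entry[OF A' B' that] eq by simp
  have "A $$ (i,j) = A' $$ (i,j)" if "i < a" "j < a" for i j
    using E[OF that z(3,4)] E[OF that z'(3,4)] z z' by blast
  hence "A = A'" using A A' by (intro eq_matI) auto
  moreover have "B $$ (k,l) = B' $$ (k,l)" if "k < b" "l < b" for k l
    using E[OF z(1,2) that] E[OF z'(1,2) that] z z' by blast
  hence "B = B'" using B B' by (intro eq_matI) auto
  ultimately show ?thesis by blast
qed

lemma bkron_list_carrier:
  "length As = length ns \<Longrightarrow> \<forall>i < length ns. As ! i \<in> carrier_mat (ns ! i) (ns ! i)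
   \<Longrightarrow> bkron_list As \<in> carrier_mat (prod_list ns) (prod_list ns)"
proof (induction ns arbitrary: As)
  case Nil thus ?case by (simp add: bkron_list_def)
next
  case (Cons m ns)
  then obtain C Cs where C: "As = C # Cs" by (cases As) auto
  have "Cs ! i \<in> carrier_mat (ns ! i) (ns ! i)" if "i < length ns" for i
    using Cons.prems(2) that C by (metis Suc_mono nth_Cons_Suc length_Cons)
  hence "bkron_list Cs \<in> carrier_mat (prod_list ns) (prod_list ns)"
    using Cons C by auto
  moreover have "C \<in> carrier_mat m m" using Cons.prems(2) C by force
  ultimately show ?case using C by (simp add: bkron_list_def bkron_carrier)
qed

lemma main:
  "length As = length ns \<Longrightarrow> \<forall>i < length ns. As ! i \<in> carrier_mat (ns ! i) (ns ! i)
   \<Longrightarrow> length Bs = length ns \<Longrightarrow> \<forall>i < length ns. Bs ! i \<in> carrier_mat (ns ! i) (ns ! i)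
   \<Longrightarrow> bkron_list As = bkron_list Bs \<Longrightarrow> nonzero_bmat (bkron_list As) \<Longrightarrow> Bs = As"
proof (induction ns arbitrary: As Bs)
  case Nil thus ?case by simp
next
  case (Cons m ns)
  then obtain C Cs where C: "As = C # Cs" by (cases As) auto
  obtain D Ds where D: "Bs = D # Ds" using Cons by (cases Bs) auto
  have Cs: "\<forall>i < length ns. Cs ! i \<in> carrier_mat (ns ! i) (ns ! i)"
    using Cons.prems(2) C by (metis Suc_mono nth_Cons_Suc length_Cons)
  have Ds: "\<forall>i < length ns. Ds ! i \<in> carrier_mat (ns ! i) (ns ! i)"
    using Cons.prems(4) D by (metis Suc_mono nth_Cons_Suc length_Cons)
  have lC: "length Cs = length ns" and lD: "length Ds = length ns" using Cons C D by auto
  have cC: "C \<in> carrier_mat m m" using Cons.prems(2) C by force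
  have cD: "D \<in> carrier_mat m m" using Cons.prems(4) D by force
  have kC: "bkron_list Cs \<in> carrier_mat (prod_list ns) (prod_list ns)"
    using bkron_list_carrier[OF lC Cs] .
  have kD: "bkron_list Ds \<in> carrier_mat (prod_list ns) (prod_list ns)"
    using bkron_list_carrier[OF lD Ds] .
  have eq: "bkron C (bkron_list Cs) = bkron D (bkron_list Ds)"
    using Cons.prems(5) C D by (simp add: bkron_list_def)
  have nz: "nonzero_bmat (bkron C (bkron_list Cs))"
    using Cons.prems(6) C by (simp add: bkron_list_def)
  from kron_cancel[OF cC cD kC kD eq nz] have 1: "C = D" "bkron_list Cs = bkron_list Ds" by auto
  obtain i j k l where "i < m" "j < m" "k < prod_list ns" "l < prod_list ns"
      "C $$ (i,j)" "bkron_list Cs $$ (k,l)"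
    using bkron_nonzero[OF cC kC nz] by blast
  hence nz2: "nonzero_bmat (bkron_list Cs)" using kC unfolding nonzero_bmat_def by auto
  have "Ds = Cs" using Cons.IH[OF lC Cs lD Ds 1(2) nz2] .
  thus ?case using C D 1 by simp
qed

theorem lemma1:
  fixes ns :: "nat list" and n :: nat and A :: "bool mat" and As Bs :: "bool mat list"
  assumes "prod_list ns = n"
    and "A \<in> carrier_mat n n"
    and "nonzero_bmat A"
    and "length As = length ns"
    and "\<forall>i < length ns. As ! i \<in> carrier_mat (ns ! i) (ns ! i)"
    and "A = bkron_list As"
    and "length Bs = length ns"
    and "\<forall>i < length ns. Bs ! i \<in> carrier_mat (ns ! i) (ns ! i)"
    and "A = bkron_list Bs"
  shows "\<forall>i < length ns. Bs ! i = As ! i"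
  using main[OF assms(4,5,7,8)] assms(3,6,9) by simp

end
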